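(* For all types $A,B,C,D$: (1) if $A\wedge B\equiv C\wedge D$ then $A\equiv C$ and $B\equiv D$; (2) if $A\Rightarrow B\equiv C\Rightarrow D$ then $A\equiv C$ and $B\equiv D$; (3) if $A\wedge B\equiv C\Rightarrow D$ then there exist types $D_1,D_2$ with $D\equiv D_1\wedge D_2$, $A\equiv C\Rightarrow D_1$ and $B\equiv C\Rightarrow D_2$.
   Context: Types: $A ::= \tau \mid A\Rightarrow A \mid A\wedge A$ with $\tau$ a single atomic type. The relation $\equiv$ on types is the smallest relation that is reflexive, symmetric, transitive, contains $A\Rightarrow (B\wedge C)\equiv (A\Rightarrow B)\wedge(A\Rightarrow C)$ for all $A,B,C$, and satisfies: $A\equiv C$ implies $A\Rightarrow B\equiv C\Rightarrow B$ and $A\wedge B\equiv C\wedge B$; $B\equiv C$ implies $A\Rightarrow B\equiv A\Rightarrow C$ and $A\wedge B\equiv A\wedge C$. *)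

theory Defs
  imports Main
begin

datatype ty = Atom | Arr ty ty | Conj ty ty

inductive tyeq :: "ty \<Rightarrow> ty \<Rightarrow> bool" where
  refl: "tyeq A A"
| sym: "tyeq A B \<Longrightarrow> tyeq B A"
| trans: "tyeq A B \<Longrightarrow> tyeq B C \<Longrightarrow> tyeq A C"
| distr: "tyeq (Arr A (Conj B C)) (Conj (Arr A B) (Arr A C))"
| arr_left: "tyeq A C \<Longrightarrow> tyeq (Arr A B) (Arr C B)"
| conj_left: "tyeq A C \<Longrightarrow> tyeq (Conj A B) (Conj C B)"
| arr_right: "tyeq B C \<Longrightarrow> tyeq (Arr A B) (Arr A C)"
| conj_right: "tyeq B C \<Longrightarrow> tyeq (Conj A B) (Conj A C)"

end

theory Submission
  imports Defs
begin

fun arr :: "ty \<Rightarrow> ty \<Rightarrow> ty" where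
  "arr a (Conj b c) = Conj (arr a b) (arr a c)"
| "arr a Atom = Arr a Atom"
| "arr a (Arr b c) = Arr a (Arr b c)"

fun nf :: "ty \<Rightarrow> ty" where
  "nf Atom = Atom"
| "nf (Conj a b) = Conj (nf a) (nf b)"
| "nf (Arr a b) = arr (nf a) (nf b)"

lemma arr_eq: "tyeq (Arr a b) (arr a b)"
proof (induction b)
  case Atom then show ?case by (simp add: tyeq.refl)
next
  case (Arr b1 b2) then show ?case by (simp add: tyeq.refl)
next
  case (Conj b1 b2)
  have "tyeq (Arr a (Conj b1 b2)) (Conj (Arr a b1) (Arr a b2))" by (rule tyeq.distr)
  moreover have "tyeq (Conj (Arr a b1) (Arr a b2)) (Conj (arr a b1) (Arr a b2))"
    using Conj.IH(1) by (rule tyeq.conj_left)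
  moreover have "tyeq (Conj (arr a b1) (Arr a b2)) (Conj (arr a b1) (arr a b2))"
    using Conj by (intro tyeq.conj_right)
  ultimately show ?case by (auto intro: tyeq.trans)
qed

lemma nf_eq: "tyeq A (nf A)"
proof (induction A)
  case Atom then show ?case by (simp add: tyeq.refl)
next
  case (Conj a b) then show ?case
    by (auto intro: tyeq.trans tyeq.conj_left tyeq.conj_right)
next
  case (Arr a b)
  have "tyeq (Arr a b) (Arr (nf a) b)" using Arr.IH(1) by (rule tyeq.arr_left)
  moreover have "tyeq (Arr (nf a) b) (Arr (nf a) (nf b))" using Arr.IH(2) by (rule tyeq.arr_right)
  ultimately show ?case using arr_eq[of "nf a" "nf b"] by (simp add: tyeq.trans)
qed

lemma sound: "tyeq A B \<Longrightarrow> nf A = nf B"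
  by (induction rule: tyeq.induct) auto

lemma tyeq_iff: "tyeq A B \<longleftrightarrow> nf A = nf B"
proof
  assume "nf A = nf B"
  then show "tyeq A B" using nf_eq[of A] nf_eq[of B]
    by (metis tyeq.sym tyeq.trans)
qed (rule sound)

lemma arr_Conj: "arr a b = Conj x y \<Longrightarrow> \<exists>b1 b2. b = Conj b1 b2 \<and> x = arr a b1 \<and> y = arr a b2"
  by (cases b) auto

lemma arr_inj: "arr a b = arr c d \<Longrightarrow> a = c \<and> b = d"
proof (induction b arbitrary: d)
  case Atom then show ?case by (cases d) auto
next
  case (Arr b1 b2) then show ?case by (cases d) auto
next
  case (Conj b1 b2) then show ?case by (cases d) auto
qed

theorem lemma4:
  fixes A B C D :: ty
  shows "(tyeq (Conj A B) (Conj C D) \<longrightarrow> tyeq A C \<and> tyeq B D)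
       \<and> (tyeq (Arr A B) (Arr C D) \<longrightarrow> tyeq A C \<and> tyeq B D)
       \<and> (tyeq (Conj A B) (Arr C D) \<longrightarrow>
            (\<exists>D1 D2. tyeq D (Conj D1 D2) \<and> tyeq A (Arr C D1) \<and> tyeq B (Arr C D2)))"
proof (intro conjI impI)
  assume "tyeq (Conj A B) (Conj C D)"
  then show "tyeq A C" "tyeq B D" by (auto simp: tyeq_iff)
next
  assume "tyeq (Arr A B) (Arr C D)"
  then have "arr (nf A) (nf B) = arr (nf C) (nf D)" by (simp add: tyeq_iff)
  then show "tyeq A C" "tyeq B D" by (auto simp: tyeq_iff dest: arr_inj)
next
  assume "tyeq (Conj A B) (Arr C D)"
  then have "arr (nf C) (nf D) = Conj (nf A) (nf B)" by (simp add: tyeq_iff)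
  then obtain d1 d2 where d: "nf D = Conj d1 d2" "nf A = arr (nf C) d1" "nf B = arr (nf C) d2"
    using arr_Conj by blast
  have cc: "tyeq (Arr (nf C) X) (Arr C X)" for X
    by (rule tyeq.arr_left, rule tyeq.sym, rule nf_eq)
  have "tyeq D (Conj d1 d2)" using nf_eq[of D] d by simp
  moreover have "tyeq A (Arr C d1)"
    using nf_eq[of A] d arr_eq[of "nf C" d1] cc[of d1] by (metis tyeq.sym tyeq.trans)
  moreover have "tyeq B (Arr C d2)"
    using nf_eq[of B] d arr_eq[of "nf C" d2] cc[of d2] by (metis tyeq.sym tyeq.trans)
  ultimately show "\<exists>D1 D2. tyeq D (Conj D1 D2) \<and> tyeq A (Arr C D1) \<and> tyeq B (Arr C D2)"
    by blast
qed

end
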